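(* Let $(Y,\preceq,\to)$ be an ordered vector space and $K=\{x\in Y: x\succeq0\}$ its positive cone. If $\prec$ is a strict vector ordering on $Y$, then $K$ is a solid cone with interior $K^\circ=\{x\in Y: x\succ 0\}$. Conversely, if $K$ is a solid cone with interior $K^\circ$, then the relation defined by $x\prec y$ iff $y-x\in K^\circ$ is the unique strict vector ordering on $Y$.
   Context: Vector space with convergence: a real vector space $Y$ with a relation $\to$ between sequences in $Y$ and points of $Y$ (uniqueness of limits not assumed) such that (C1) $x_n\to x$, $y_n\to y$ imply $x_n+y_n\to x+y$; (C2) $x_n\to x$, $\lambda\in\mathbb R$ imply $\lambda x_n\to\lambda x$; (C3) $\lambda_n\to\lambda$ in $\mathbb R$, $x\in Y$ imply $\lambda_n x\to\lambda x$. $A\subseteq Y$ is open if $x_n\to x\in A$ implies $x_n\in A$ for all but finitely many $n$; closed if $x_n\to x$, $x_n\in A$ for all $n$ imply $x\in A$. $A^\circ$ is the union of all open subsets of $A$. A cone is a nonempty closed $K$ with $\lambda K\subseteq K$ ($\lambda\ge 0$), $K+K\subseteq K$, $K\cap(-K)=\{0\}$; solid if $K\ne\{0\}$ and $K^\circ\neq\emptyset$. A vector ordering is a partial order $\preceq$ with (V1) $x\preceq y\Rightarrow x+z\preceq y+z$; (V2) $\lambda\ge0$, $x\preceq y\Rightarrow\lambda x\preceq\lambda y$; (V3) $x_n\to x$, $y_n\to y$, $x_n\preceq y_n$ $\forall n\Rightarrow x\preceq y$; $(Y,\preceq,\to)$ is then an ordered vector space. A strict ordering is a nonempty irreflexive,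 asymmetric, transitive relation. A strict vector ordering on an ordered vector space is a strict ordering $\prec$ such that (S1) $x\prec y\Rightarrow x\preceq y$; (S2) $x\preceq y$, $y\prec z\Rightarrow x\prec z$; (S3) $x\prec y\Rightarrow x+z\prec y+z$; (S4) $\lambda>0$, $x\prec y\Rightarrow\lambda x\prec\lambda y$; (S5) if $x_n\to x$, $y_n\to y$ and $x\prec y$, then $x_n\prec y_n$ for all but finitely many $n$. $x\succ y$ means $y\prec x$. *)

theory Defs
  imports Main "HOL.Real_Vector_Spaces"
begin

text \<open>A real vector space with a sequential convergence relation (limits need not be unique).\<close>
definition conv_space :: "((nat \<Rightarrow> 'a::real_vector) \<Rightarrow> 'a \<Rightarrow> bool) \<Rightarrow> bool" where
  "conv_space cv \<longleftrightarrow>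
     (\<forall>x y a b. cv x a \<longrightarrow> cv y b \<longrightarrow> cv (\<lambda>n. x n + y n) (a + b)) \<and>
     (\<forall>x a (c::real). cv x a \<longrightarrow> cv (\<lambda>n. c *\<^sub>R x n) (c *\<^sub>R a)) \<and>
     (\<forall>(l::nat \<Rightarrow> real) c a. l \<longlonglongrightarrow> c \<longrightarrow> cv (\<lambda>n. l n *\<^sub>R a) (c *\<^sub>R a))"

definition cv_open :: "((nat \<Rightarrow> 'a) \<Rightarrow> 'a \<Rightarrow> bool) \<Rightarrow> 'a set \<Rightarrow> bool" where
  "cv_open cv A \<longleftrightarrow> (\<forall>x a. cv x a \<longrightarrow> a \<in> A \<longrightarrow> (\<forall>\<^sub>F n in sequentially. x n \<in> A))"

definition cv_closed :: "((nat \<Rightarrow> 'a) \<Rightarrow> 'a \<Rightarrow> bool) \<Rightarrow> 'a set \<Rightarrow> bool" where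
  "cv_closed cv A \<longleftrightarrow> (\<forall>x a. cv x a \<longrightarrow> (\<forall>n. x n \<in> A) \<longrightarrow> a \<in> A)"

definition cv_interior :: "((nat \<Rightarrow> 'a) \<Rightarrow> 'a \<Rightarrow> bool) \<Rightarrow> 'a set \<Rightarrow> 'a set" where
  "cv_interior cv A = \<Union>{U. U \<subseteq> A \<and> cv_open cv U}"

definition cv_cone :: "((nat \<Rightarrow> 'a::real_vector) \<Rightarrow> 'a \<Rightarrow> bool) \<Rightarrow> 'a set \<Rightarrow> bool" where
  "cv_cone cv K \<longleftrightarrow> K \<noteq> {} \<and> cv_closed cv K \<and>
     (\<forall>(c::real) x. c \<ge> 0 \<longrightarrow> x \<in> K \<longrightarrow> c *\<^sub>R x \<in> K) \<and>
     (\<forall>x y. x \<in> K \<longrightarrow> y \<in> K \<longrightarrow> x + y \<in> K) \<and>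
     K \<inter> uminus ` K = {0}"

definition cv_solid_cone :: "((nat \<Rightarrow> 'a::real_vector) \<Rightarrow> 'a \<Rightarrow> bool) \<Rightarrow> 'a set \<Rightarrow> bool" where
  "cv_solid_cone cv K \<longleftrightarrow> cv_cone cv K \<and> K \<noteq> {0} \<and> cv_interior cv K \<noteq> {}"

definition vector_ordering ::
  "((nat \<Rightarrow> 'a::real_vector) \<Rightarrow> 'a \<Rightarrow> bool) \<Rightarrow> ('a \<Rightarrow> 'a \<Rightarrow> bool) \<Rightarrow> bool" where
  "vector_ordering cv le \<longleftrightarrow>
     (\<forall>x. le x x) \<and> (\<forall>x y. le x y \<longrightarrow> le y x \<longrightarrow> x = y) \<and>
     (\<forall>x y z. le x y \<longrightarrow> le y z \<longrightarrow> le x z) \<and>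
     (\<forall>x y z. le x y \<longrightarrow> le (x + z) (y + z)) \<and>
     (\<forall>(c::real) x y. c \<ge> 0 \<longrightarrow> le x y \<longrightarrow> le (c *\<^sub>R x) (c *\<^sub>R y)) \<and>
     (\<forall>x y a b. cv x a \<longrightarrow> cv y b \<longrightarrow> (\<forall>n. le (x n) (y n)) \<longrightarrow> le a b)"

definition strict_ordering :: "('a \<Rightarrow> 'a \<Rightarrow> bool) \<Rightarrow> bool" where
  "strict_ordering lt \<longleftrightarrow> (\<exists>x y. lt x y) \<and> (\<forall>x. \<not> lt x x) \<and>
     (\<forall>x y. lt x y \<longrightarrow> \<not> lt y x) \<and> (\<forall>x y z. lt x y \<longrightarrow> lt y z \<longrightarrow> lt x z)"

definition strict_vector_ordering ::
  "((nat \<Rightarrow> 'a::real_vector) \<Rightarrow> 'a \<Rightarrow> bool) \<Rightarrow> ('a \<Rightarrow> 'a \<Rightarrow> bool) \<Rightarrow> ('a \<Rightarrow> 'a \<Rightarrow> bool) \<Rightarrow> bool" where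
  "strict_vector_ordering cv le lt \<longleftrightarrow> strict_ordering lt \<and>
     (\<forall>x y. lt x y \<longrightarrow> le x y) \<and>
     (\<forall>x y z. le x y \<longrightarrow> lt y z \<longrightarrow> lt x z) \<and>
     (\<forall>x y z. lt x y \<longrightarrow> lt (x + z) (y + z)) \<and>
     (\<forall>(c::real) x y. c > 0 \<longrightarrow> lt x y \<longrightarrow> lt (c *\<^sub>R x) (c *\<^sub>R y)) \<and>
     (\<forall>x y a b. cv x a \<longrightarrow> cv y b \<longrightarrow> lt a b \<longrightarrow> (\<forall>\<^sub>F n in sequentially. lt (x n) (y n)))"

end

theory Submission
  imports Defs Complex_Main
begin

lemma cs_add: "conv_space cv \<Longrightarrow> cv x a \<Longrightarrow> cv y b \<Longrightarrow> cv (\<lambda>n. x n + y n) (a + b)"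
  unfolding conv_space_def by blast
lemma cs_scale: "conv_space cv \<Longrightarrow> cv x a \<Longrightarrow> cv (\<lambda>n. c *\<^sub>R x n) (c *\<^sub>R a)"
  unfolding conv_space_def by blast
lemma cs_lim: "conv_space cv \<Longrightarrow> l \<longlonglongrightarrow> c \<Longrightarrow> cv (\<lambda>n. l n *\<^sub>R a) (c *\<^sub>R a)"
  unfolding conv_space_def by blast
lemma cs_const: "conv_space cv \<Longrightarrow> cv (\<lambda>n. a) a"
  using cs_lim[of cv "\<lambda>n. 1" 1 a] by simp
lemma cs_transl: "conv_space cv \<Longrightarrow> cv s a \<Longrightarrow> cv (\<lambda>n. s n + k) (a + k)"
  by (rule cs_add, assumption, assumption, rule cs_const)
lemma cs_diff: "conv_space cv \<Longrightarrow> cv x a \<Longrightarrow> cv y b \<Longrightarrow> cv (\<lambda>n. y n - x n) (b - a)"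
  using cs_add[of cv y b "\<lambda>n. (-1) *\<^sub>R x n" "(-1) *\<^sub>R a"] cs_scale[of cv x a "-1"] by simp

lemma cs_seq: "conv_space cv \<Longrightarrow> cv (\<lambda>n. x - inverse (real (Suc n)) *\<^sub>R e) x"
proof -
  assume c: "conv_space cv"
  have L: "(\<lambda>n. - inverse (real (Suc n))) \<longlonglongrightarrow> - 0"
    by (intro tendsto_minus LIMSEQ_inverse_real_of_nat)
  have "cv (\<lambda>n. (- inverse (real (Suc n))) *\<^sub>R e) (0 *\<^sub>R e)"
    using cs_lim[OF c L, of e] by simp
  from cs_add[OF c cs_const[OF c] this, of x] show ?thesis by simp
qed

lemma ev_some: "\<forall>\<^sub>F n in sequentially. P n \<Longrightarrow> \<exists>n. P n"
  unfolding eventually_sequentially by blast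

lemma int_open: "cv_open cv (cv_interior cv A)"
  unfolding cv_open_def[of cv "cv_interior cv A"]
proof (intro allI impI)
  fix x a assume "cv x a" "a \<in> cv_interior cv A"
  then obtain U where U: "U \<subseteq> A" "cv_open cv U" "a \<in> U" unfolding cv_interior_def by blast
  then have "\<forall>\<^sub>F n in sequentially. x n \<in> U" using \<open>cv x a\<close> unfolding cv_open_def by blast
  then show "\<forall>\<^sub>F n in sequentially. x n \<in> cv_interior cv A"
  proof (rule eventually_mono)
    fix n assume "x n \<in> U"
    then show "x n \<in> cv_interior cv A" using U(1,2) unfolding cv_interior_def by blast
  qed
qed

lemma int_sub: "cv_interior cv A \<subseteq> A"
  unfolding cv_interior_def by blast
lemma open_int: "cv_open cv U \<Longrightarrow> U \<subseteq> A \<Longrightarrow> U \<subseteq> cv_interior cv A"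
  unfolding cv_interior_def by blast

lemma vo_le_iff:
  assumes "vector_ordering cv le" shows "le x y \<longleftrightarrow> le 0 (y - x)"
proof
  assume "le x y"
  then have "le (x + - x) (y + - x)" using assms unfolding vector_ordering_def by blast
  then show "le 0 (y - x)" by simp
next
  assume "le 0 (y - x)"
  then have "le (0 + x) ((y - x) + x)" using assms unfolding vector_ordering_def by blast
  then show "le x y" by simp
qed

lemma svo_lt_iff:
  assumes "strict_vector_ordering cv le lt" shows "lt x y \<longleftrightarrow> lt 0 (y - x)"
proof
  assume "lt x y"
  then have "lt (x + - x) (y + - x)" using assms unfolding strict_vector_ordering_def by blast
  then show "lt 0 (y - x)" by simp
next
  assume "lt 0 (y - x)"
  then have "lt (0 + x) ((y - x) + x)" using assms unfolding strict_vector_ordering_def by blast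
  then show "lt x y" by simp
qed

lemma part1:
  fixes cv :: "(nat \<Rightarrow> 'a::real_vector) \<Rightarrow> 'a \<Rightarrow> bool"
  assumes c: "conv_space cv" and v: "vector_ordering cv le"
    and s: "strict_vector_ordering cv le lt"
  defines "K \<equiv> {x. le 0 x}"
  shows "cv_solid_cone cv K \<and> cv_interior cv K = {x. lt 0 x}"
proof -
  have refl: "\<And>x. le x x" and antis: "\<And>x y. le x y \<Longrightarrow> le y x \<Longrightarrow> x = y"
    and trans: "\<And>x y z. le x y \<Longrightarrow> le y z \<Longrightarrow> le x z"
    and V1: "\<And>x y z. le x y \<Longrightarrow> le (x + z) (y + z)"
    and V2: "\<And>x y (t::real). t \<ge> 0 \<Longrightarrow> le x y \<Longrightarrow> le (t *\<^sub>R x) (t *\<^sub>R y)"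
    and V3: "\<And>x y a b. cv x a \<Longrightarrow> cv y b \<Longrightarrow> (\<forall>n. le (x n) (y n)) \<Longrightarrow> le a b"
    using v unfolding vector_ordering_def by blast+
  have ne: "\<exists>x y. lt x y" and irr: "\<And>x. \<not> lt x x"
    and S1: "\<And>x y. lt x y \<Longrightarrow> le x y"
    and S2: "\<And>x y z. le x y \<Longrightarrow> lt y z \<Longrightarrow> lt x z"
    and S3: "\<And>x y z. lt x y \<Longrightarrow> lt (x + z) (y + z)"
    and S4: "\<And>x y (t::real). t > 0 \<Longrightarrow> lt x y \<Longrightarrow> lt (t *\<^sub>R x) (t *\<^sub>R y)"
    and S5: "\<And>x y a b. cv x a \<Longrightarrow> cv y b \<Longrightarrow> lt a b \<Longrightarrow> (\<forall>\<^sub>F n in sequentially. lt (x n) (y n))"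
    using s unfolding strict_vector_ordering_def strict_ordering_def by blast+
  have cone: "cv_cone cv K"
    unfolding cv_cone_def
  proof (intro conjI allI impI)
    show "K \<noteq> {}" using refl K_def by blast
    show "cv_closed cv K" unfolding cv_closed_def K_def
      using V3[OF cs_const[OF c]] by blast
    fix t :: real and x assume "0 \<le> t" "x \<in> K"
    then show "t *\<^sub>R x \<in> K" using V2[of t 0 x] K_def by simp
  next
    fix x y assume "x \<in> K" "y \<in> K"
    then have "le y (x + y)" using V1[of 0 x y] K_def by simp
    then show "x + y \<in> K" using trans \<open>y \<in> K\<close> K_def by blast
  next
    show "K \<inter> uminus ` K = {0}"
    proof
      show "{0} \<subseteq> K \<inter> uminus ` K" using refl K_def by force
      show "K \<inter> uminus ` K \<subseteq> {0}"
      proof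
        fix x assume "x \<in> K \<inter> uminus ` K"
        then have a: "le 0 x" "le 0 (- x)" using K_def by auto
        from V1[OF a(2), of x] have "le x 0" by simp
        with a(1) antis show "x \<in> {0}" by blast
      qed
    qed
  qed
  have opn: "cv_open cv {x. lt 0 x}"
    unfolding cv_open_def
  proof (intro allI impI)
    fix x a assume "cv x a" "a \<in> {x. lt 0 x}"
    then show "\<forall>\<^sub>F n in sequentially. x n \<in> {x. lt 0 x}"
      using S5[OF cs_const[OF c] \<open>cv x a\<close>, of 0] by simp
  qed
  have sub: "{x. lt 0 x} \<subseteq> K" using S1 K_def by blast
  from ne obtain x0 y0 where "lt x0 y0" by blast
  then have e: "lt 0 (y0 - x0)" using svo_lt_iff[OF s] by blast
  have sub1: "{x. lt 0 x} \<subseteq> cv_interior cv K" using open_int[OF opn sub] .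
  have sub2: "cv_interior cv K \<subseteq> {x. lt 0 x}"
  proof
    fix x assume "x \<in> cv_interior cv K"
    define d where "d = y0 - x0"
    have "\<forall>\<^sub>F n in sequentially. x - inverse (real (Suc n)) *\<^sub>R d \<in> cv_interior cv K"
      using int_open[of cv K] cs_seq[OF c, of x d] \<open>x \<in> cv_interior cv K\<close>
      unfolding cv_open_def by blast
    from ev_some[OF this] obtain n where "x - inverse (real (Suc n)) *\<^sub>R d \<in> cv_interior cv K" by blast
    then have "x - inverse (real (Suc n)) *\<^sub>R d \<in> K" by (rule subsetD[OF int_sub])
    then have h: "le 0 (x - inverse (real (Suc n)) *\<^sub>R d)" using K_def by simp
    define a where "a = inverse (real (Suc n)) *\<^sub>R d"
    have la: "lt 0 a" using S4[OF _ e, of "inverse (real (Suc n))"] unfolding a_def d_def by simp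
    from V1[OF h, of "a - x"] have "le (a - x) 0" unfolding a_def by simp
    from S2[OF this la] have "lt (a - x) a" .
    from S3[OF this, of "x - a"] show "x \<in> {x. lt 0 x}" by simp
  qed
  have "K \<noteq> {0}" using e sub irr by auto
  moreover have "cv_interior cv K \<noteq> {}" using e sub1 by auto
  ultimately show ?thesis using cone sub1 sub2 unfolding cv_solid_cone_def by blast
qed

lemma part2:
  fixes cv :: "(nat \<Rightarrow> 'a::real_vector) \<Rightarrow> 'a \<Rightarrow> bool"
  assumes c: "conv_space cv" and v: "vector_ordering cv le"
  defines "K \<equiv> {x. le 0 x}"
  assumes sc: "cv_solid_cone cv K"
  shows "strict_vector_ordering cv le (\<lambda>x y. y - x \<in> cv_interior cv K)"
proof -
  define I where "I = cv_interior cv K"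
  have Iop: "cv_open cv I" unfolding I_def by (rule int_open)
  have IK: "I \<subseteq> K" unfolding I_def by (rule int_sub)
  have Kne: "K \<noteq> {0}" and Ine: "I \<noteq> {}" and cone: "cv_cone cv K"
    using sc unfolding cv_solid_cone_def I_def by blast+
  have Kadd: "\<And>x y. x \<in> K \<Longrightarrow> y \<in> K \<Longrightarrow> x + y \<in> K"
    and Ksc: "\<And>(t::real) x. t \<ge> 0 \<Longrightarrow> x \<in> K \<Longrightarrow> t *\<^sub>R x \<in> K"
    and Kpt: "K \<inter> uminus ` K = {0}"
    using cone unfolding cv_cone_def by blast+
  have IKI: "x + k \<in> I" if x: "x \<in> I" and k: "k \<in> K" for x k
  proof -
    define U where "U = (\<lambda>u. u + k) ` I"
    have "cv_open cv U" unfolding cv_open_def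
    proof (intro allI impI)
      fix s a assume "cv s a" "a \<in> U"
      then have "a - k \<in> I" unfolding U_def by auto
      moreover have "cv (\<lambda>n. s n + - k) (a + - k)" using cs_transl[OF c \<open>cv s a\<close>] .
      ultimately have "\<forall>\<^sub>F n in sequentially. s n + - k \<in> I" using Iop unfolding cv_open_def by simp
      then show "\<forall>\<^sub>F n in sequentially. s n \<in> U"
        by (rule eventually_mono) (auto simp: U_def image_iff intro: bexI[of _ "_ + - k"])
    qed
    moreover have "U \<subseteq> K" unfolding U_def using IK Kadd k by blast
    ultimately have "U \<subseteq> I" unfolding I_def by (rule open_int)
    then show ?thesis using x unfolding U_def by blast
  qed
  have IsI: "t *\<^sub>R x \<in> I" if x: "x \<in> I" and t: "t > 0" for x t
  proof -
    define U where "U = (\<lambda>u. t *\<^sub>R u) ` I"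
    have "cv_open cv U" unfolding cv_open_def
    proof (intro allI impI)
      fix s a assume "cv s a" "a \<in> U"
      then have "inverse t *\<^sub>R a \<in> I" unfolding U_def using t by auto
      moreover have "cv (\<lambda>n. inverse t *\<^sub>R s n) (inverse t *\<^sub>R a)" using cs_scale[OF c \<open>cv s a\<close>] .
      ultimately have "\<forall>\<^sub>F n in sequentially. inverse t *\<^sub>R s n \<in> I" using Iop unfolding cv_open_def by blast
      then show "\<forall>\<^sub>F n in sequentially. s n \<in> U"
      proof (rule eventually_mono)
        fix n assume "inverse t *\<^sub>R s n \<in> I"
        moreover have "s n = t *\<^sub>R (inverse t *\<^sub>R s n)" using t by simp
        ultimately show "s n \<in> U" unfolding U_def by blast
      qed
    qed
    moreover have "U \<subseteq> K" unfolding U_def using IK Ksc t by auto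
    ultimately have "U \<subseteq> I" unfolding I_def by (rule open_int)
    then show ?thesis using x unfolding U_def by blast
  qed
  have z: "0 \<notin> I"
  proof
    assume "0 \<in> I"
    from Kne cone obtain e where e: "e \<in> K" "e \<noteq> 0" unfolding cv_cone_def by blast
    have "\<forall>\<^sub>F n in sequentially. 0 - inverse (real (Suc n)) *\<^sub>R e \<in> I"
      using Iop cs_seq[OF c, of 0 e] \<open>0 \<in> I\<close> unfolding cv_open_def by blast
    from ev_some[OF this] obtain n where "0 - inverse (real (Suc n)) *\<^sub>R e \<in> I" by blast
    then have "0 - inverse (real (Suc n)) *\<^sub>R e \<in> K" using IK by blast
    from Ksc[OF _ this, of "real (Suc n)"] have "- e \<in> K" by simp
    then have "e \<in> K \<inter> uminus ` K" using e(1) by (auto intro: image_eqI[of _ _ "- e"])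
    with Kpt e(2) show False by blast
  qed
  have leK: "le x y \<longleftrightarrow> y - x \<in> K" for x y using vo_le_iff[OF v] K_def by simp
  show ?thesis
    unfolding strict_vector_ordering_def strict_ordering_def I_def[symmetric]
  proof (intro conjI allI impI)
    from Ine obtain e where "e \<in> I" by blast
    then show "\<exists>x y. y - x \<in> I" by (intro exI[of _ 0] exI[of _ e]) simp
    show "\<And>x. \<not> x - x \<in> I" using z by simp
    fix x y assume a: "y - x \<in> I"
    show "\<not> x - y \<in> I"
    proof
      assume "x - y \<in> I"
      then have "(x - y) + (y - x) \<in> I" using IKI a IK by blast
      with z show False by simp
    qed
    show "le x y" using a IK leK by blast
  next
    fix x y z assume "y - x \<in> I" "z - y \<in> I"
    then have "(z - y) + (y - x) \<in> I" using IKI IK by blast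
    then show "z - x \<in> I" by simp
  next
    fix x y z assume "le x y" "z - y \<in> I"
    then have "(z - y) + (y - x) \<in> I" using IKI leK by blast
    then show "z - x \<in> I" by simp
  next
    fix x y z assume "y - x \<in> I" then show "y + z - (x + z) \<in> I" by simp
  next
    fix t :: real and x y assume "0 < t" "y - x \<in> I"
    then have "t *\<^sub>R (y - x) \<in> I" using IsI by blast
    then show "t *\<^sub>R y - t *\<^sub>R x \<in> I" by (simp add: scaleR_diff_right)
  next
    fix x y a b assume "cv x a" "cv y b" "b - a \<in> I"
    then show "\<forall>\<^sub>F n in sequentially. y n - x n \<in> I"
      using Iop cs_diff[OF c \<open>cv x a\<close> \<open>cv y b\<close>] unfolding cv_open_def by blast
  qed
qed

theorem theorem5p2:
  fixes cv :: "(nat \<Rightarrow> 'a::real_vector) \<Rightarrow> 'a \<Rightarrow> bool"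
    and le :: "'a \<Rightarrow> 'a \<Rightarrow> bool"
  assumes "conv_space cv"
    and "vector_ordering cv le"
  defines "K \<equiv> {x. le 0 x}"
  shows "(\<forall>lt. strict_vector_ordering cv le lt \<longrightarrow>
            cv_solid_cone cv K \<and> cv_interior cv K = {x. lt 0 x}) \<and>
         (cv_solid_cone cv K \<longrightarrow>
            strict_vector_ordering cv le (\<lambda>x y. y - x \<in> cv_interior cv K) \<and>
            (\<forall>lt. strict_vector_ordering cv le lt \<longrightarrow> lt = (\<lambda>x y. y - x \<in> cv_interior cv K)))"
proof -
  have P1: "cv_solid_cone cv K \<and> cv_interior cv K = {x. lt 0 x}"
    if "strict_vector_ordering cv le lt" for lt
    using part1[OF assms(1,2) that] by (simp add: K_def)
  have P2: "strict_vector_ordering cv le (\<lambda>x y. y - x \<in> cv_interior cv K)"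
    if "cv_solid_cone cv K"
    using part2[OF assms(1,2)] that by (simp add: K_def)
  have P3: "lt = (\<lambda>x y. y - x \<in> cv_interior cv K)"
    if s: "strict_vector_ordering cv le lt" for lt
  proof (intro ext)
    fix x y
    have "cv_interior cv K = {x. lt 0 x}" using P1[OF s] by blast
    then show "lt x y = (y - x \<in> cv_interior cv K)"
      using svo_lt_iff[OF s, of x y] by simp
  qed
  show ?thesis using P1 P2 P3 by blast
qed

end
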